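(* A function $f\colon\prod_{i\in[n]}X_i\to Y$ is a pseudo-polynomial function if and only if it is pseudo-median decomposable.
   Context: $Y$ is a finite distributive lattice with least element $0$ and greatest element $1$. $[n]=\{1,\ldots,n\}$. $X_1,\ldots,X_n$ are arbitrary sets with at least two elements; in each $X_k$ two distinct elements $0_{X_k},1_{X_k}$ (written $0,1$) are fixed. A map $\varphi_k\colon X_k\to Y$ satisfies the boundary condition if $\varphi_k(0_{X_k})\le\varphi_k(x_k)\le\varphi_k(1_{X_k})$ for all $x_k\in X_k$. A polynomial function $p\colon Y^n\to Y$ is a function obtained by composing the lattice operations $\wedge,\vee$ with variables and constants of $Y$. $f$ is a pseudo-polynomial function if there exist a polynomial function $p\colon Y^n\to Y$ and maps $\varphi_k\colon X_k\to Y$ satisfying the boundary condition with $f(\mathbf{x})=p(\varphi_1(x_1),\ldots,\varphi_n(x_n))$ for all $\mathbf{x}$. For $\mathbf{x}$ and $a\in X_k$, $\mathbf{x}_k^a$ is $\mathbf{x}$ with its $k$-th component replaced by $a$. $\operatorname{med}(y_1,y_2,y_3)=(y_1\wedge y_2)\vee(y_2\wedge y_3)\vee(y_3\wedge y_1)$. $f$ is pseudo-median decomposable if for each $k\in[n]$ there is a map $\varphi_k\colon X_k\to Y$ satisfying the boundary condition such that $f(\mathbf{x})=\operatorname{med}\big(f(\mathbf{x}_k^0),\varphi_k(x_k),f(\mathbf{x}_k^1)\big)$ for every $\mathbf{x}\in\prod_{i\in[n]}X_i$. *)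

theory Defs
  imports Main "HOL-Library.FuncSet"
begin

text \<open>Lattice polynomial functions Y^n -> Y (n-tuples modelled as functions nat => Y,
  only coordinates 1..n used): the smallest class containing the projections onto
  coordinates 1..n and the constants, closed under pointwise meet and join.\<close>
inductive polynomial_function :: "nat \<Rightarrow> ((nat \<Rightarrow> 'y::lattice) \<Rightarrow> 'y) \<Rightarrow> bool"
  for n :: nat where
  proj: "k \<in> {1..n} \<Longrightarrow> polynomial_function n (\<lambda>y. y k)"
| const: "polynomial_function n (\<lambda>y. c)"
| meet: "polynomial_function n p \<Longrightarrow> polynomial_function n q \<Longrightarrow>
         polynomial_function n (\<lambda>y. inf (p y) (q y))"
| join: "polynomial_function n p \<Longrightarrow> polynomial_function n q \<Longrightarrow>
         polynomial_function n (\<lambda>y. sup (p y) (q y))"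

definition med :: "'y::lattice \<Rightarrow> 'y \<Rightarrow> 'y \<Rightarrow> 'y" where
  "med a b c = sup (sup (inf a b) (inf b c)) (inf c a)"

definition boundary_cond :: "'x set \<Rightarrow> 'x \<Rightarrow> 'x \<Rightarrow> ('x \<Rightarrow> 'y::order) \<Rightarrow> bool" where
  "boundary_cond Xk zk ok \<phi> \<longleftrightarrow> (\<forall>a\<in>Xk. \<phi> zk \<le> \<phi> a \<and> \<phi> a \<le> \<phi> ok)"

definition pseudo_polynomial ::
  "nat \<Rightarrow> (nat \<Rightarrow> 'x set) \<Rightarrow> (nat \<Rightarrow> 'x) \<Rightarrow> (nat \<Rightarrow> 'x) \<Rightarrow> ((nat \<Rightarrow> 'x) \<Rightarrow> 'y::lattice) \<Rightarrow> bool" where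
  "pseudo_polynomial n X z u f \<longleftrightarrow>
     (\<exists>p \<phi>. polynomial_function n p \<and>
        (\<forall>k\<in>{1..n}. boundary_cond (X k) (z k) (u k) (\<phi> k)) \<and>
        (\<forall>x\<in>PiE {1..n} X. f x = p (\<lambda>i. \<phi> i (x i))))"

definition pseudo_median_decomposable ::
  "nat \<Rightarrow> (nat \<Rightarrow> 'x set) \<Rightarrow> (nat \<Rightarrow> 'x) \<Rightarrow> (nat \<Rightarrow> 'x) \<Rightarrow> ((nat \<Rightarrow> 'x) \<Rightarrow> 'y::lattice) \<Rightarrow> bool" where
  "pseudo_median_decomposable n X z u f \<longleftrightarrow>
     (\<forall>k\<in>{1..n}. \<exists>\<phi>k. boundary_cond (X k) (z k) (u k) \<phi>k \<and>
        (\<forall>x\<in>PiE {1..n} X. f x = med (f (x(k := z k))) (\<phi>k (x k)) (f (x(k := u k)))))"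

end

theory Submission
  imports Defs
begin

lemma l_meet:
  fixes A1 B1 A2 B2 t :: "'y::distrib_lattice"
  assumes "A1 \<le> B1" "A2 \<le> B2"
  shows "inf (sup A1 (inf t B1)) (sup A2 (inf t B2)) = sup (inf A1 A2) (inf t (inf B1 B2))"
  using assms
  by (smt (verit, best) abel_semigroup.commute inf.abel_semigroup_axioms
    inf.semigroup_axioms inf.semilattice_axioms inf.semilattice_order_axioms
    inf_sup_distrib1 inf_sup_distrib2 le_iff_sup semigroup.assoc
    semilattice.left_idem semilattice.right_idem semilattice_order.orderE
    sup.semilattice_axioms sup_inf_distrib2)

lemma l_join:
  fixes A1 B1 A2 B2 t :: "'y::distrib_lattice"
  shows "sup (sup A1 (inf t B1)) (sup A2 (inf t B2)) = sup (sup A1 A2) (inf t (sup B1 B2))"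
  by (simp add: inf_sup_distrib1 sup.assoc sup.left_commute)

lemma l_med2:
  fixes A B t :: "'y::distrib_lattice"
  assumes "A \<le> B"
  shows "med A t B = sup A (inf t B)"
  unfolding med_def using assms
  by (metis inf.absorb_iff1 inf_commute inf_sup_distrib2 sup.absorb_iff1 sup_commute)

lemma med_mono:
  fixes A B a b :: "'y::distrib_lattice"
  assumes "a \<le> b"
  shows "med A a B \<le> med A b B"
  unfolding med_def using assms
  by (metis (no_types, opaque_lifting) inf_commute inf_sup_distrib2
    sup.commute sup.left_commute sup.orderI sup_absorb2 sup_left_idem)

lemma l_med:
  fixes A B a b t :: "'y::distrib_lattice"
  assumes "A \<le> B" "a \<le> t" "t \<le> b"
  shows "med (sup A (inf a B)) t (sup A (inf b B)) = sup A (inf t B)"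
proof -
  have "sup A (inf a B) \<le> sup A (inf b B)" using assms
    by (meson inf_mono order.trans order.refl sup_mono)
  then have "med (sup A (inf a B)) t (sup A (inf b B)) = sup (sup A (inf a B)) (inf t (sup A (inf b B)))"
    by (rule l_med2)
  also have "\<dots> = sup A (inf t B)" using assms
    by (smt (verit, ccfv_SIG) inf.order_iff inf_commute inf_left_commute
    inf_sup_distrib1 sup.absorb_iff2 sup_assoc)
  finally show ?thesis .
qed

lemma poly_lin:
  fixes p :: "(nat \<Rightarrow> 'y::{distrib_lattice, bounded_lattice}) \<Rightarrow> 'y"
  assumes "polynomial_function n p"
  shows "p (y(k:=t)) = sup (p (y(k:=bot))) (inf t (p (y(k:=top)))) \<and> p (y(k:=bot)) \<le> p (y(k:=top))"
  using assms
proof (induction rule: polynomial_function.induct)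
  case (proj j)
  then show ?case by (cases "j = k") (auto simp: sup_absorb1)
next
  case (const c)
  then show ?case by (simp add: sup_absorb1)
next
  case (meet p q)
  have le: "p (y(k:=bot)) \<le> p (y(k:=top))" "q (y(k:=bot)) \<le> q (y(k:=top))" using meet.IH by blast+
  have "inf (p (y(k:=bot))) (q (y(k:=bot))) \<le> inf (p (y(k:=top))) (q (y(k:=top)))"
    using le by (rule inf_mono)
  then show ?case using meet.IH l_meet[OF le, of t] by metis
next
  case (join p q)
  have le: "p (y(k:=bot)) \<le> p (y(k:=top))" "q (y(k:=bot)) \<le> q (y(k:=top))" using join.IH by blast+
  have "sup (p (y(k:=bot))) (q (y(k:=bot))) \<le> sup (p (y(k:=top))) (q (y(k:=top)))"
    using le by (rule sup_mono)
  then show ?case using join.IH l_join[of "p (y(k:=bot))" t "p (y(k:=top))" "q (y(k:=bot))" "q (y(k:=top))"] by metis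
qed

lemma upd_PiE: "x \<in> PiE I X \<Longrightarrow> k \<in> I \<Longrightarrow> a \<in> X k \<Longrightarrow> x(k:=a) \<in> PiE I X"
  by (auto simp: PiE_def extensional_def)

primrec P :: "((nat\<Rightarrow>'x)\<Rightarrow>'y::lattice) \<Rightarrow> (nat\<Rightarrow>'x) \<Rightarrow> (nat\<Rightarrow>'x) \<Rightarrow> nat \<Rightarrow> (nat\<Rightarrow>'x) \<Rightarrow> (nat \<Rightarrow> 'y) \<Rightarrow> 'y" where
  "P f z u 0 c y = f c"
| "P f z u (Suc m) c y = sup (P f z u m (c(Suc m := z (Suc m))) y) (inf (y (Suc m)) (P f z u m (c(Suc m := u (Suc m))) y))"

lemma P_poly: "m \<le> n \<Longrightarrow> polynomial_function n (P f z u m c)"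
proof (induction m arbitrary: c)
  case 0
  have "P f z u 0 c = (\<lambda>y. f c)" by (rule ext) simp
  then show ?case by (simp add: polynomial_function.const)
next
  case (Suc m)
  have e: "P f z u (Suc m) c = (\<lambda>y. sup (P f z u m (c(Suc m := z (Suc m))) y) ((\<lambda>y. inf (y (Suc m)) (P f z u m (c(Suc m := u (Suc m))) y)) y))"
    by (rule ext) simp
  have p1: "polynomial_function n (P f z u m (c(Suc m := z (Suc m))))" using Suc by simp
  have p2: "polynomial_function n (P f z u m (c(Suc m := u (Suc m))))" using Suc by simp
  have p3: "polynomial_function n (\<lambda>y. y (Suc m))" using Suc by (intro polynomial_function.proj) simp
  have "polynomial_function n (\<lambda>y. inf (y (Suc m)) (P f z u m (c(Suc m := u (Suc m))) y))"
    by (rule polynomial_function.meet[OF p3 p2])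
  then show ?case unfolding e by (rule polynomial_function.join[OF p1])
qed

lemma P_cong: "(\<forall>i. i \<notin> {1..m} \<longrightarrow> c i = c' i) \<Longrightarrow> P f z u m c y = P f z u m c' y"
proof (induction m arbitrary: c c')
  case 0
  then have "c = c'" by auto
  then show ?case by simp
next
  case (Suc m)
  have a: "P f z u m (c(Suc m := z (Suc m))) y = P f z u m (c'(Suc m := z (Suc m))) y"
    by (rule Suc.IH) (use Suc.prems in auto)
  have b: "P f z u m (c(Suc m := u (Suc m))) y = P f z u m (c'(Suc m := u (Suc m))) y"
    by (rule Suc.IH) (use Suc.prems in auto)
  show ?case using a b by simp
qed

theorem mainTheorem2:
  fixes n :: nat
    and X :: "nat \<Rightarrow> 'x set"
    and z u :: "nat \<Rightarrow> 'x"
    and f :: "(nat \<Rightarrow> 'x) \<Rightarrow> 'y::{finite, distrib_lattice, bounded_lattice}"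
  assumes "\<forall>k\<in>{1..n}. z k \<in> X k \<and> u k \<in> X k \<and> z k \<noteq> u k"
  shows "pseudo_polynomial n X z u f \<longleftrightarrow> pseudo_median_decomposable n X z u f"
proof
  assume "pseudo_polynomial n X z u f"
  then obtain p \<phi> where pp: "polynomial_function n p"
    and bc: "\<forall>k\<in>{1..n}. boundary_cond (X k) (z k) (u k) (\<phi> k)"
    and fe: "\<forall>x\<in>PiE {1..n} X. f x = p (\<lambda>i. \<phi> i (x i))"
    unfolding pseudo_polynomial_def by blast
  show "pseudo_median_decomposable n X z u f"
    unfolding pseudo_median_decomposable_def
  proof
    fix k assume k: "k \<in> {1..n}"
    show "\<exists>\<phi>k. boundary_cond (X k) (z k) (u k) \<phi>k \<and>
        (\<forall>x\<in>PiE {1..n} X. f x = med (f (x(k := z k))) (\<phi>k (x k)) (f (x(k := u k))))"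
    proof (intro exI conjI ballI)
      show "boundary_cond (X k) (z k) (u k) (\<phi> k)" using bc k by blast
      fix x assume x: "x \<in> PiE {1..n} X"
      define y where "y = (\<lambda>i. \<phi> i (x i))"
      have zk: "z k \<in> X k" and uk: "u k \<in> X k" using assms k by auto
      have xk: "x k \<in> X k" using x k by auto
      have "(\<lambda>i. \<phi> i ((x(k := z k)) i)) = y(k := \<phi> k (z k))" by (rule ext) (simp add: y_def)
      then have e1: "f (x(k := z k)) = p (y(k := \<phi> k (z k)))"
        using fe upd_PiE[OF x k zk] by simp
      have "(\<lambda>i. \<phi> i ((x(k := u k)) i)) = y(k := \<phi> k (u k))" by (rule ext) (simp add: y_def)
      then have e2: "f (x(k := u k)) = p (y(k := \<phi> k (u k)))"
        using fe upd_PiE[OF x k uk] by simp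
      have "y(k := \<phi> k (x k)) = y" unfolding y_def by (rule fun_upd_triv)
      then have e0: "f x = p (y(k := \<phi> k (x k)))"
        using fe x by (simp add: y_def)
      have bnd: "\<phi> k (z k) \<le> \<phi> k (x k)" "\<phi> k (x k) \<le> \<phi> k (u k)"
        using bc k xk unfolding boundary_cond_def by auto
      note L = poly_lin[OF pp, of y k]
      show "f x = med (f (x(k := z k))) (\<phi> k (x k)) (f (x(k := u k)))"
        unfolding e0 e1 e2 using L l_med[OF _ bnd] by metis
    qed
  qed
next
  assume "pseudo_median_decomposable n X z u f"
  then obtain \<phi> where bc: "\<forall>k\<in>{1..n}. boundary_cond (X k) (z k) (u k) (\<phi> k)"
    and dec: "\<forall>k\<in>{1..n}. \<forall>x\<in>PiE {1..n} X. f x = med (f (x(k := z k))) (\<phi> k (x k)) (f (x(k := u k)))"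
    unfolding pseudo_median_decomposable_def by metis
  have ev: "\<forall>x\<in>PiE {1..n} X. \<forall>y. (\<forall>i\<in>{1..m}. y i = \<phi> i (x i)) \<longrightarrow> f x = P f z u m x y"
    if "m \<le> n" for m
    using that
  proof (induction m)
    case 0
    then show ?case by simp
  next
    case (Suc m)
    show ?case
    proof (intro ballI allI impI)
      fix x y assume x: "x \<in> PiE {1..n} X" and yy: "\<forall>i\<in>{1..Suc m}. y i = \<phi> i (x i)"
      define k where "k = Suc m"
      have k: "k \<in> {1..n}" using Suc.prems k_def by auto
      have zk: "z k \<in> X k" and uk: "u k \<in> X k" using assms k by auto
      define x1 where "x1 = x(k := z k)"
      define x2 where "x2 = x(k := u k)"
      have x1: "x1 \<in> PiE {1..n} X" unfolding x1_def by (rule upd_PiE[OF x k zk])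
      have x2: "x2 \<in> PiE {1..n} X" unfolding x2_def by (rule upd_PiE[OF x k uk])
      have IH: "\<forall>x\<in>PiE {1..n} X. \<forall>y. (\<forall>i\<in>{1..m}. y i = \<phi> i (x i)) \<longrightarrow> f x = P f z u m x y"
        using Suc by simp
      have f1: "f x1 = P f z u m x1 y" using IH x1 yy unfolding x1_def k_def by auto
      have f2: "f x2 = P f z u m x2 y" using IH x2 yy unfolding x2_def k_def by auto
      have d0: "f x = med (f x1) (\<phi> k (x k)) (f x2)" using dec k x unfolding x1_def x2_def by blast
      have d1: "f x1 = med (f x1) (\<phi> k (z k)) (f x2)"
        using dec k x1 unfolding x1_def x2_def by (metis fun_upd_same fun_upd_upd)
      have d2: "f x2 = med (f x1) (\<phi> k (u k)) (f x2)"
        using dec k x2 unfolding x1_def x2_def by (metis fun_upd_same fun_upd_upd)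
      have "\<phi> k (z k) \<le> \<phi> k (u k)" using bc k uk unfolding boundary_cond_def by auto
      then have le: "f x1 \<le> f x2" using d1 d2 med_mono by metis
      have "f x = sup (f x1) (inf (\<phi> k (x k)) (f x2))" using d0 l_med2[OF le] by simp
      also have "\<dots> = P f z u (Suc m) x y"
        using f1 f2 yy unfolding x1_def x2_def k_def by simp
      finally show "f x = P f z u (Suc m) x y" .
    qed
  qed
  define x0 where "x0 = restrict z {1..n}"
  show "pseudo_polynomial n X z u f"
    unfolding pseudo_polynomial_def
  proof (intro exI conjI ballI)
    show "polynomial_function n (P f z u n x0)" by (rule P_poly) simp
    fix k assume "k \<in> {1..n}"
    then show "boundary_cond (X k) (z k) (u k) (\<phi> k)" using bc by blast
  next
    fix x assume x: "x \<in> PiE {1..n} X"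
    have "f x = P f z u n x (\<lambda>i. \<phi> i (x i))" using ev[of n] x by simp
    also have "\<dots> = P f z u n x0 (\<lambda>i. \<phi> i (x i))"
      by (rule P_cong) (use x in \<open>auto simp: x0_def PiE_def extensional_def\<close>)
    finally show "f x = P f z u n x0 (\<lambda>i. \<phi> i (x i))" .
  qed
qed

end
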